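(* Let $S=\{p_0,p_1,\dots,p_m\}$ be a set of $m+1$ polynomials and let $n\in\mathbb{N}$ be the smallest integer with $S\subset\mathcal{P}_n$. Then: (1) if $m\le n$ and $\operatorname{span}(S)=\mathcal{P}_m$, then $W(p_0,\dots,p_m)(x)=C(p_0,\dots,p_m)(x)$ for all $x$; (2) if $m\le n$ and $S$ is linearly dependent, then $W(p_0,\dots,p_m)\equiv 0\equiv C(p_0,\dots,p_m)$; (3) if $m<n$ and $\operatorname{span}(S)\ne\mathcal{P}_k$ for every $k=1,2,\dots,m$, then $W(p_0,\dots,p_m)\neq C(p_0,\dots,p_m)$ (as functions of $x$); (4) if $m>n$, then $S$ is linearly dependent and $W(p_0,\dots,p_m)\equiv 0\equiv C(p_0,\dots,p_m)$.
   Context: $\mathcal{P}_n$ denotes the vector space of real polynomials of degree at most $n$ together with the zero polynomial. For $N$ functions, the Wronskian $W(f_1,\dots,f_N)(x)$ is the determinant of the $N\times N$ matrix with $(i,j)$ entry $f_j^{(i-1)}(x)$, and the Casoratian $C(f_1,\dots,f_N)(x)$ is the determinant of the $N\times N$ matrix with $(i,j)$ entry $f_j(x+i-1)$.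
   Formalization: Item (3) also assumes that m is at least 1 and that S is linearly independent. The statement above fails without it. *)

theory Defs
  imports "HOL-Computational_Algebra.Polynomial" "Jordan_Normal_Form.Determinant"
begin

definition polys_upto :: "nat \<Rightarrow> real poly set" where
  "polys_upto k = {q. degree q \<le> k}"

definition poly_span :: "(nat \<Rightarrow> real poly) \<Rightarrow> nat \<Rightarrow> real poly set" where
  "poly_span p m = {(\<Sum>i\<le>m. smult (c i) (p i)) | c. True}"

definition poly_lin_dep :: "(nat \<Rightarrow> real poly) \<Rightarrow> nat \<Rightarrow> bool" where
  "poly_lin_dep p m \<longleftrightarrow>
     (\<exists>c. (\<exists>i\<le>m. c i \<noteq> 0) \<and> (\<Sum>i\<le>m. smult (c i) (p i)) = 0)"

definition wronskian :: "(nat \<Rightarrow> real poly) \<Rightarrow> nat \<Rightarrow> real \<Rightarrow> real" where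
  "wronskian p m x = det (mat (Suc m) (Suc m) (\<lambda>(i, j). poly ((pderiv ^^ i) (p j)) x))"

definition casoratian :: "(nat \<Rightarrow> real poly) \<Rightarrow> nat \<Rightarrow> real \<Rightarrow> real" where
  "casoratian p m x = det (mat (Suc m) (Suc m) (\<lambda>(i, j). poly (p j) (x + real i)))"

end

theory Submission
  imports Defs
begin


definition FS :: "nat \<Rightarrow> nat \<Rightarrow> (nat \<Rightarrow> nat) set" where
  "FS r s = {f. (\<forall>i\<in>{0..<r}. f i \<in> {0..<s}) \<and> (\<forall>i. i \<notin> {0..<r} \<longrightarrow> f i = i)}"

lemma det_mult_expand:
  fixes A F :: "real mat"
  assumes A: "A \<in> carrier_mat r s" and F: "F \<in> carrier_mat s r"
  shows "det (A * F) = (\<Sum>f\<in>FS r s. (\<Prod>j\<in>{0..<r}. F $$ (f j, j)) * det (mat r r (\<lambda>(i,j). A $$ (i, f j))))"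
proof -
  have "det (A * F) = det (transpose_mat (A * F))"
    using A F by (metis det_transpose mult_carrier_mat)
  also have "transpose_mat (A * F) = transpose_mat F * transpose_mat A"
    using A F by (simp add: transpose_mult)
  also have "\<dots> = mat\<^sub>r r r (\<lambda>j. finsum_vec TYPE(real) r (\<lambda>k. F $$ (k, j) \<cdot>\<^sub>v col A k) {0..<s})"
    using A F unfolding mat_mul_finsum_alt[of "transpose_mat F" r s "transpose_mat A" r, OF transpose_carrier_mat[THEN iffD2, OF F] transpose_carrier_mat[THEN iffD2, OF A]]
    by (intro eq_matI) (auto simp: index_finsum_vec)
  also have "det \<dots> = (\<Sum>f\<in>FS r s. det (mat\<^sub>r r r (\<lambda>j. F $$ (f j, j) \<cdot>\<^sub>v col A (f j))))"
    unfolding FS_def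
    by (rule det_linear_rows_sum) (use A in auto)
  also have "\<dots> = (\<Sum>f\<in>FS r s. (\<Prod>j\<in>{0..<r}. F $$ (f j, j)) * det (mat r r (\<lambda>(i,j). A $$ (i, f j))))"
  proof (rule sum.cong[OF refl])
    fix f assume f: "f \<in> FS r s"
    have "det (mat\<^sub>r r r (\<lambda>j. F $$ (f j, j) \<cdot>\<^sub>v col A (f j))) =
        prod (\<lambda>j. F $$ (f j, j)) {0..<r} * det (mat\<^sub>r r r (\<lambda>j. col A (f j)))"
      by (rule det_rows_mul) (use A in auto)
    also have "mat\<^sub>r r r (\<lambda>j. col A (f j)) = transpose_mat (mat r r (\<lambda>(i,j). A $$ (i, f j)))"
      using A f unfolding FS_def by (intro eq_matI) auto
    also have "det \<dots> = det (mat r r (\<lambda>(i,j). A $$ (i, f j)))"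
      by (rule det_transpose) auto
    finally show "det (mat\<^sub>r r r (\<lambda>j. F $$ (f j, j) \<cdot>\<^sub>v col A (f j))) =
        (\<Prod>j\<in>{0..<r}. F $$ (f j, j)) * det (mat r r (\<lambda>(i,j). A $$ (i, f j)))" .
  qed
  finally show ?thesis .
qed

lemma roots_force:
  fixes t :: "nat \<Rightarrow> real" and \<psi> :: "real poly"
  assumes inj: "inj_on t {..m}" and roots: "\<forall>j\<le>m. poly \<psi> (t j) = 0" and nz: "\<psi> \<noteq> 0"
  shows "Suc m \<le> degree \<psi>"
proof -
  have sub: "t ` {..m} \<subseteq> {x. poly \<psi> x = 0}" using roots by auto
  have "card (t ` {..m}) = Suc m" using inj by (simp add: card_image)
  moreover have "card (t ` {..m}) \<le> card {x. poly \<psi> x = 0}"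
    using sub poly_roots_finite[OF nz] by (intro card_mono)
  ultimately have "Suc m \<le> card {x. poly \<psi> x = 0}" by simp
  also have "\<dots> \<le> degree \<psi>" by (rule card_poly_roots_bound[OF nz])
  finally show ?thesis .
qed

lemma comb_nonzero:
  fixes \<phi> :: "nat \<Rightarrow> real poly" and e :: "nat \<Rightarrow> nat" and v :: "nat \<Rightarrow> real"
  assumes "\<forall>l\<le>M. \<phi> l \<noteq> 0 \<and> degree (\<phi> l) = e l"
    and "\<forall>l l'. l < l' \<longrightarrow> l' \<le> M \<longrightarrow> e l < e l'"
    and "\<exists>l\<le>M. v l \<noteq> 0"
  shows "(\<Sum>l\<le>M. smult (v l) (\<phi> l)) \<noteq> 0"
  using assms
proof (induction M)
  case 0
  then show ?case by auto
next
  case (Suc M)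
  show ?case
  proof (cases "v (Suc M) = 0")
    case True
    then have "\<exists>l\<le>M. v l \<noteq> 0" using Suc.prems(3) by (metis le_Suc_eq)
    then have "(\<Sum>l\<le>M. smult (v l) (\<phi> l)) \<noteq> 0" using Suc by auto
    then show ?thesis using True by simp
  next
    case False
    have "coeff (\<Sum>l\<le>Suc M. smult (v l) (\<phi> l)) (e (Suc M)) =
          (\<Sum>l\<le>M. v l * coeff (\<phi> l) (e (Suc M))) + v (Suc M) * coeff (\<phi> (Suc M)) (e (Suc M))"
      by (simp add: coeff_sum)
    also have "(\<Sum>l\<le>M. v l * coeff (\<phi> l) (e (Suc M))) = 0"
    proof (rule sum.neutral, rule ballI)
      fix l assume "l \<in> {..M}"
      then have "degree (\<phi> l) < e (Suc M)" using Suc.prems(1,2) by auto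
      then show "v l * coeff (\<phi> l) (e (Suc M)) = 0" by (simp add: coeff_eq_0)
    qed
    finally have "coeff (\<Sum>l\<le>Suc M. smult (v l) (\<phi> l)) (e (Suc M)) \<noteq> 0"
      using False Suc.prems(1) by (metis add_0 le_refl leading_coeff_0_iff mult_eq_0_iff)
    then show ?thesis by (metis coeff_0)
  qed
qed

lemma coeff_prod_linear:
  fixes t :: "nat \<Rightarrow> real"
  assumes "finite J"
  shows "degree (\<Prod>j\<in>J. [:- t j, 1:]) = card J \<and> lead_coeff (\<Prod>j\<in>J. [:- t j, 1:]) = 1 \<and>
         coeff (\<Prod>j\<in>J. [:- t j, 1:]) (card J - 1) = (if J = {} then 1 else - (\<Sum>j\<in>J. t j))"
  using assms
proof (induction J rule: finite_induct)
  case empty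
  then show ?case by simp
next
  case (insert a J)
  let ?P = "\<Prod>j\<in>J. [:- t j, 1:]"
  have P0: "?P \<noteq> 0" using insert by auto
  have eq: "(\<Prod>j\<in>insert a J. [:- t j, 1:]) = [:- t a, 1:] * ?P"
    using insert by simp
  have deg: "degree ([:- t a, 1:] * ?P) = Suc (card J)"
    using insert P0 by (subst degree_mult_eq) auto
  have lc: "lead_coeff ([:- t a, 1:] * ?P) = 1"
  proof -
    have l1: "lead_coeff [:- t a, 1:] = (1::real)" by simp
    have l2: "lead_coeff ?P = 1" using insert by blast
    show ?thesis unfolding lead_coeff_mult l1 l2 by simp
  qed
  have co: "coeff ([:- t a, 1:] * ?P) (card J) = - t a * coeff ?P (card J) + (if card J = 0 then 0 else coeff ?P (card J - 1))"
    by (cases "card J") (simp_all add: mult_pCons_left)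
  have "coeff ([:- t a, 1:] * ?P) (card J) = - (\<Sum>j\<in>insert a J. t j)"
    using insert co by (cases "J = {}") (auto simp: card_eq_0_iff)
  then show ?case using insert eq deg lc by simp
qed

lemma roots_coeff:
  fixes t :: "nat \<Rightarrow> real" and \<psi> :: "real poly"
  assumes inj: "inj_on t {..m}" and roots: "\<forall>j\<le>m. poly \<psi> (t j) = 0" and deg: "degree \<psi> = Suc m"
  shows "coeff \<psi> m = - lead_coeff \<psi> * (\<Sum>j\<le>m. t j)"
proof -
  let ?P = "\<Prod>j\<in>{..m}. [:- t j, 1:]"
  have P: "degree ?P = Suc m" "lead_coeff ?P = 1" "coeff ?P m = - (\<Sum>j\<le>m. t j)"
    using coeff_prod_linear[of "{..m}" t] by auto
  define R where "R = \<psi> - smult (lead_coeff \<psi>) ?P"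
  have "coeff R (Suc m) = 0" unfolding R_def using P deg by simp
  moreover have "degree R \<le> Suc m" unfolding R_def
  proof (rule degree_diff_le)
    show "degree \<psi> \<le> Suc m" using deg by simp
    show "degree (smult (lead_coeff \<psi>) ?P) \<le> Suc m"
      using P degree_smult_le[of "lead_coeff \<psi>" ?P] by simp
  qed
  ultimately have dR: "degree R \<le> m"
  proof (intro degree_le allI impI)
    fix i assume c: "coeff R (Suc m) = 0" and d: "degree R \<le> Suc m" and i: "m < i"
    show "coeff R i = 0"
    proof (cases "i = Suc m")
      case True then show ?thesis using c by simp
    next
      case False then have "degree R < i" using i d by linarith
      then show ?thesis by (rule coeff_eq_0)
    qed
  qed
  have "\<forall>j\<le>m. poly R (t j) = 0"
  proof (intro allI impI)
    fix j assume j: "j \<le> m"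
    have "poly ?P (t j) = 0" unfolding poly_prod using j by (intro prod_zero) auto
    then show "poly R (t j) = 0" unfolding R_def using roots j by simp
  qed
  then have "R = 0" using roots_force[OF inj] dR by fastforce
  then have "\<psi> = smult (lead_coeff \<psi>) ?P" unfolding R_def by simp
  then have "coeff \<psi> m = lead_coeff \<psi> * coeff ?P m" by (metis coeff_smult)
  then show ?thesis using P by simp
qed


lemma det_K_nonzero:
  fixes \<phi> :: "nat \<Rightarrow> real poly" and t :: "nat \<Rightarrow> real"
  assumes m1: "1 \<le> m" and inj: "inj_on t {..m}"
    and phi_lt: "\<forall>l<m. \<phi> l \<noteq> 0 \<and> degree (\<phi> l) = l"
    and phi_m: "degree (\<phi> m) = Suc m"
    and cond: "coeff (\<phi> m) m \<noteq> - lead_coeff (\<phi> m) * (\<Sum>j\<le>m. t j)"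
  shows "det (mat (Suc m) (Suc m) (\<lambda>(j,l). poly (\<phi> l) (t j))) \<noteq> 0"
proof
  let ?M = "mat (Suc m) (Suc m) (\<lambda>(j,l). poly (\<phi> l) (t j))"
  assume "det ?M = 0"
  then obtain v where v: "v \<in> carrier_vec (Suc m)" "v \<noteq> 0\<^sub>v (Suc m)" "?M *\<^sub>v v = 0\<^sub>v (Suc m)"
    using det_0_iff_vec_prod_zero[of ?M "Suc m"] by auto
  define \<psi> where "\<psi> = (\<Sum>l\<le>m. smult (v $ l) (\<phi> l))"
  have roots: "\<forall>j\<le>m. poly \<psi> (t j) = 0"
  proof (intro allI impI)
    fix j assume j: "j \<le> m"
    have "(?M *\<^sub>v v) $ j = 0" using j by (subst v(3)) simp
    moreover have "(?M *\<^sub>v v) $ j = (\<Sum>l<Suc m. poly (\<phi> l) (t j) * v $ l)"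
      using v(1) j by (simp add: scalar_prod_def row_def atLeast0LessThan)
    moreover have "poly \<psi> (t j) = (\<Sum>l\<le>m. v $ l * poly (\<phi> l) (t j))"
      unfolding \<psi>_def by (simp add: poly_sum)
    ultimately show "poly \<psi> (t j) = 0" by (simp add: lessThan_Suc_atMost mult.commute)
  qed
  have ex: "\<exists>l\<le>m. v $ l \<noteq> 0"
  proof (rule ccontr)
    assume "\<not> (\<exists>l\<le>m. v $ l \<noteq> 0)"
    then have "v = 0\<^sub>v (Suc m)" using v(1) by (intro eq_vecI) auto
    then show False using v(2) by simp
  qed
  define e where "e l = (if l < m then l else Suc m)" for l
  have nz: "\<psi> \<noteq> 0" unfolding \<psi>_def
    by (rule comb_nonzero[where e = e]) (use phi_lt phi_m ex in \<open>auto simp: e_def\<close>)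
  have dge: "Suc m \<le> degree \<psi>" by (rule roots_force[OF inj roots nz])
  have split: "\<And>g :: nat \<Rightarrow> 'b :: comm_monoid_add. (\<Sum>l\<le>m. g l) = g m + (\<Sum>l<m. g l)"
    by (simp add: lessThan_Suc_atMost[symmetric] add.commute)
  have vm: "v $ m \<noteq> 0"
  proof
    assume vm0: "v $ m = 0"
    have "degree \<psi> \<le> m - 1" unfolding \<psi>_def
    proof (rule degree_sum_le)
      fix l assume l: "l \<in> {..m}"
      show "degree (smult (v $ l) (\<phi> l)) \<le> m - 1"
      proof (cases "l = m")
        case True then show ?thesis using vm0 by simp
      next
        case False then have "l < m" using l by auto
        then show ?thesis using phi_lt degree_smult_le[of "v $ l" "\<phi> l"] by auto
      qed
    qed simp
    then show False using dge m1 by linarith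
  qed
  have cSuc: "coeff \<psi> (Suc m) = v $ m * lead_coeff (\<phi> m)"
  proof -
    have "coeff \<psi> (Suc m) = v $ m * coeff (\<phi> m) (Suc m) + (\<Sum>l<m. v $ l * coeff (\<phi> l) (Suc m))"
      unfolding \<psi>_def coeff_sum by (subst split) simp
    also have "(\<Sum>l<m. v $ l * coeff (\<phi> l) (Suc m)) = 0"
      using phi_lt by (intro sum.neutral) (auto simp: coeff_eq_0)
    finally show ?thesis using phi_m by simp
  qed
  have cm: "coeff \<psi> m = v $ m * coeff (\<phi> m) m"
  proof -
    have "coeff \<psi> m = v $ m * coeff (\<phi> m) m + (\<Sum>l<m. v $ l * coeff (\<phi> l) m)"
      unfolding \<psi>_def coeff_sum by (subst split) simp
    also have "(\<Sum>l<m. v $ l * coeff (\<phi> l) m) = 0"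
      using phi_lt by (intro sum.neutral) (auto simp: coeff_eq_0)
    finally show ?thesis by simp
  qed
  have "degree \<psi> \<le> Suc m" unfolding \<psi>_def
  proof (rule degree_sum_le)
    fix l assume l: "l \<in> {..m}"
    show "degree (smult (v $ l) (\<phi> l)) \<le> Suc m"
    proof (cases "l = m")
      case True then show ?thesis using phi_m degree_smult_le[of "v $ l" "\<phi> l"] by simp
    next
      case False then have "l < m" using l by auto
      then show ?thesis using phi_lt degree_smult_le[of "v $ l" "\<phi> l"] by auto
    qed
  qed simp
  then have dpsi: "degree \<psi> = Suc m" using dge by simp
  have "coeff \<psi> m = - lead_coeff \<psi> * (\<Sum>j\<le>m. t j)" by (rule roots_coeff[OF inj roots dpsi])
  then have "v $ m * coeff (\<phi> m) m = v $ m * (- lead_coeff (\<phi> m) * (\<Sum>j\<le>m. t j))"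
    using cm cSuc dpsi by simp
  then have "coeff (\<phi> m) m = - lead_coeff (\<phi> m) * (\<Sum>j\<le>m. t j)" using vm by (metis minus_mult_right mult_left_cancel)
  then show False using cond by simp
qed


definition ff :: "nat \<Rightarrow> real poly" where
  "ff k = (\<Prod>l<k. [:- real l, 1:])"

lemma ff_props:
  "degree (ff k) = k" "lead_coeff (ff k) = 1" "ff k \<noteq> 0"
  "coeff (ff (Suc m)) m = - (\<Sum>l\<le>m. real l)"
proof -
  have c: "degree (ff k) = card {..<k} \<and> lead_coeff (ff k) = 1"
    using coeff_prod_linear[of "{..<k}" real] unfolding ff_def by blast
  then have "degree (ff k) = k \<and> lead_coeff (ff k) = 1" by (metis card_lessThan)
  then show "degree (ff k) = k" "lead_coeff (ff k) = 1" by blast+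
  then show "ff k \<noteq> 0" by (metis coeff_0 zero_neq_one)
  show "coeff (ff (Suc m)) m = - (\<Sum>l\<le>m. real l)"
    using coeff_prod_linear[of "{..<Suc m}" real] unfolding ff_def by (simp add: lessThan_Suc_atMost)
qed

lemma poly_ff: "poly (ff k) x = (\<Prod>l<k. x - real l)"
  unfolding ff_def poly_prod by simp

lemma poly_ff_zero: "i < k \<Longrightarrow> poly (ff k) (real i) = 0"
  unfolding poly_ff by (rule prod_zero) auto

lemma pochhammer_ff: "k \<le> d \<Longrightarrow> pochhammer (real (d - k) + 1) k = poly (ff k) (real d)"
proof (induction k)
  case 0 then show ?case by (simp add: poly_ff)
next
  case (Suc k)
  have e1: "real (d - Suc k) + 1 = real d - real k" using Suc.prems by (simp add: of_nat_diff)
  have e2: "real d - real k + 1 = real (d - k) + 1" using Suc.prems by (simp add: of_nat_diff)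
  have "pochhammer (real (d - Suc k) + 1) (Suc k) = (real d - real k) * pochhammer (real (d - k) + 1) k"
    unfolding pochhammer_rec e1 e2 ..
  also have "\<dots> = poly (ff (Suc k)) (real d)" using Suc by (simp add: poly_ff)
  finally show ?case .
qed

lemma poly_ff_self: "poly (ff i) (real i) = fact i"
  using pochhammer_ff[of i i] by (simp add: pochhammer_fact)

lemma higher_pderiv_zero: "degree (q :: real poly) < k \<Longrightarrow> (pderiv ^^ k) q = 0"
  by (rule poly_eqI) (simp add: coeff_higher_pderiv coeff_eq_0)

lemma coeff_higher_pderiv_top:
  fixes q :: "real poly"
  shows "coeff ((pderiv ^^ k) q) (degree q - k) = poly (ff k) (real (degree q)) * lead_coeff q"
proof (cases "k \<le> degree q")
  case True
  have "coeff ((pderiv ^^ k) q) (degree q - k) = pochhammer (real (degree q - k) + 1) k * coeff q (degree q - k + k)"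
    by (simp add: coeff_higher_pderiv add.commute)
  then show ?thesis using True pochhammer_ff[OF True] by simp
next
  case False
  then show ?thesis using higher_pderiv_zero[of q k] poly_ff_zero[of "degree q" k] by simp
qed

lemma taylor_poly:
  fixes q :: "real poly"
  assumes "degree q < s"
  shows "poly q (x + t) = (\<Sum>k<s. t ^ k / fact k * poly ((pderiv ^^ k) q) x)"
proof -
  define diff where "diff k u = poly ((pderiv ^^ k) q) (x + u)" for k u
  have "\<forall>k u. (diff k has_real_derivative diff (Suc k) u) (at u)"
  proof (intro allI)
    fix k u
    have "((\<lambda>u. poly ((pderiv ^^ k) q) (x + u)) has_real_derivative
           poly (pderiv ((pderiv ^^ k) q)) (x + u) * 1) (at u)"
      by (rule DERIV_chain2[OF poly_DERIV]) (auto intro!: derivative_eq_intros)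
    then show "(diff k has_real_derivative diff (Suc k) u) (at u)"
      unfolding diff_def by simp
  qed
  moreover have "diff 0 = (\<lambda>u. poly q (x + u))" unfolding diff_def by auto
  ultimately obtain tt where
    "poly q (x + t) = (\<Sum>m<s. diff m 0 / fact m * t ^ m) + diff s tt / fact s * t ^ s"
    using Maclaurin_all_le[of diff "\<lambda>u. poly q (x + u)" t s] by auto
  moreover have "diff s tt = 0" unfolding diff_def using higher_pderiv_zero[OF assms] by simp
  ultimately show ?thesis unfolding diff_def by (simp add: mult.commute)
qed


definition Fm :: "(nat \<Rightarrow> real poly) \<Rightarrow> nat \<Rightarrow> nat \<Rightarrow> real \<Rightarrow> real mat" where
  "Fm p r s x = mat s r (\<lambda>(k,j). poly ((pderiv ^^ k) (p j)) x)"
definition Vm :: "nat \<Rightarrow> nat \<Rightarrow> real mat" where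
  "Vm r s = mat r s (\<lambda>(i,k). real i ^ k / fact k)"
definition Im :: "nat \<Rightarrow> nat \<Rightarrow> real mat" where
  "Im r s = mat r s (\<lambda>(i,k). if i = k then 1 else 0)"

abbreviation Wm :: "(nat \<Rightarrow> real poly) \<Rightarrow> nat \<Rightarrow> real \<Rightarrow> real mat" where
  "Wm p m x \<equiv> mat (Suc m) (Suc m) (\<lambda>(i, j). poly ((pderiv ^^ i) (p j)) x)"
abbreviation Cm :: "(nat \<Rightarrow> real poly) \<Rightarrow> nat \<Rightarrow> real \<Rightarrow> real mat" where
  "Cm p m x \<equiv> mat (Suc m) (Suc m) (\<lambda>(i, j). poly (p j) (x + real i))"

lemma Cm_factor:
  assumes "\<forall>j<Suc m. degree (p j) < s"
  shows "Cm p m x = Vm (Suc m) s * Fm p (Suc m) s x"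
proof (rule eq_matI)
  fix i j assume i: "i < dim_row (Vm (Suc m) s * Fm p (Suc m) s x)" and j: "j < dim_col (Vm (Suc m) s * Fm p (Suc m) s x)"
  then have i': "i < Suc m" and j': "j < Suc m" by (auto simp: Vm_def Fm_def)
  have "(Vm (Suc m) s * Fm p (Suc m) s x) $$ (i, j) = (\<Sum>k<s. real i ^ k / fact k * poly ((pderiv ^^ k) (p j)) x)"
    using i' j' by (simp add: Vm_def Fm_def scalar_prod_def atLeast0LessThan)
  also have "\<dots> = poly (p j) (x + real i)"
    using taylor_poly[of "p j" s x "real i"] assms j' by simp
  finally show "Cm p m x $$ (i, j) = (Vm (Suc m) s * Fm p (Suc m) s x) $$ (i, j)"
    using i' j' by simp
qed (auto simp: Vm_def Fm_def)

lemma Wm_factor: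
  assumes "Suc m \<le> s"
  shows "Wm p m x = Im (Suc m) s * Fm p (Suc m) s x"
proof (rule eq_matI)
  fix i j assume i: "i < dim_row (Im (Suc m) s * Fm p (Suc m) s x)" and j: "j < dim_col (Im (Suc m) s * Fm p (Suc m) s x)"
  then have i': "i < Suc m" and j': "j < Suc m" by (auto simp: Im_def Fm_def)
  have "(Im (Suc m) s * Fm p (Suc m) s x) $$ (i, j) = (\<Sum>k\<in>{0..<s}. (if i = k then 1 else 0) * poly ((pderiv ^^ k) (p j)) x)"
    using i' j' by (simp add: Im_def Fm_def scalar_prod_def)
  also have "\<dots> = poly ((pderiv ^^ i) (p j)) x"
  proof -
    have "(\<Sum>k\<in>{0..<s}. (if i = k then 1 else 0) * poly ((pderiv ^^ k) (p j)) x) =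
          (\<Sum>k\<in>{0..<s}. if i = k then poly ((pderiv ^^ k) (p j)) x else 0)"
      by (rule sum.cong) auto
    also have "\<dots> = poly ((pderiv ^^ i) (p j)) x" using i' assms by (simp add: sum.delta)
    finally show ?thesis .
  qed
  finally show "Wm p m x $$ (i, j) = (Im (Suc m) s * Fm p (Suc m) s x) $$ (i, j)"
    using i' j' by simp
qed (auto simp: Im_def Fm_def)

lemma ff_lc: "coeff (ff k) k = 1"
  using ff_props(1)[of k] ff_props(2)[of k] by metis

lemma det_Vm: "det (Vm (Suc m) (Suc m)) = 1"
proof -
  let ?r = "Suc m"
  have deg: "\<forall>j<Suc m. degree (ff j) < Suc m" by (simp add: ff_props)
  have fC: "Cm ff m 0 = Vm ?r ?r * Fm ff ?r ?r 0" by (rule Cm_factor[OF deg])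
  have fW: "Wm ff m 0 = Im ?r ?r * Fm ff ?r ?r 0" by (rule Wm_factor) simp
  have Im1: "Im ?r ?r = 1\<^sub>m ?r" by (auto simp: Im_def)
  have F: "Fm ff ?r ?r 0 \<in> carrier_mat ?r ?r" by (simp add: Fm_def)
  have V: "Vm ?r ?r \<in> carrier_mat ?r ?r" by (simp add: Vm_def)
  have dC: "det (Cm ff m 0) = prod_list (diag_mat (Cm ff m 0))"
    by (rule det_lower_triangular[of ?r]) (auto simp: poly_ff_zero)
  have dW: "det (Wm ff m 0) = prod_list (diag_mat (Wm ff m 0))"
  proof (rule det_upper_triangular)
    show "upper_triangular (Wm ff m 0)"
      unfolding upper_triangular_def using higher_pderiv_zero ff_props(1) by auto
  qed auto
  have diag: "diag_mat (Cm ff m 0) = diag_mat (Wm ff m 0)"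
  proof -
    have "poly ((pderiv ^^ i) (ff i)) 0 = fact i" for i
      using coeff_higher_pderiv_top[of i "ff i"] by (simp add: poly_0_coeff_0 ff_props poly_ff_self ff_lc)
    then show ?thesis by (auto simp: diag_mat_def poly_ff_self)
  qed
  have nz: "det (Wm ff m 0) \<noteq> 0"
  proof -
    have "poly ((pderiv ^^ i) (ff i)) 0 = fact i" for i
      using coeff_higher_pderiv_top[of i "ff i"] by (simp add: poly_0_coeff_0 ff_props poly_ff_self ff_lc)
    then show ?thesis unfolding dW by (auto simp: diag_mat_def prod_list_zero_iff)
  qed
  have "det (Cm ff m 0) = det (Vm ?r ?r) * det (Wm ff m 0)"
    unfolding fC fW Im1 using F V by (simp add: det_mult)
  moreover have "det (Cm ff m 0) = det (Wm ff m 0)" using dC dW diag by simp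
  ultimately show ?thesis using nz by simp
qed


lemma cas_eq_wron_low:
  assumes "\<forall>j\<le>m. degree (p j) \<le> m"
  shows "casoratian p m x = wronskian p m x"
proof -
  let ?r = "Suc m"
  have deg: "\<forall>j<Suc m. degree (p j) < Suc m" using assms by (simp add: less_Suc_eq_le)
  have F: "Fm p ?r ?r x \<in> carrier_mat ?r ?r" by (simp add: Fm_def)
  have V: "Vm ?r ?r \<in> carrier_mat ?r ?r" by (simp add: Vm_def)
  have Im1: "Im ?r ?r = 1\<^sub>m ?r" by (auto simp: Im_def)
  have "casoratian p m x = det (Vm ?r ?r * Fm p ?r ?r x)"
    unfolding casoratian_def using Cm_factor[OF deg] by simp
  also have "\<dots> = det (Fm p ?r ?r x)" using F V by (simp add: det_mult det_Vm)
  also have "\<dots> = det (Im ?r ?r * Fm p ?r ?r x)" unfolding Im1 using F by simp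
  also have "\<dots> = wronskian p m x" unfolding wronskian_def using Wm_factor[of m ?r p x] by simp
  finally show ?thesis .
qed

definition linf :: "(real poly \<Rightarrow> real) \<Rightarrow> bool" where
  "linf L \<longleftrightarrow> (\<forall>p q. L (p + q) = L p + L q) \<and> (\<forall>a p. L (smult a p) = a * L p)"

lemma linf_sum:
  assumes "linf L"
  shows "L (\<Sum>j\<in>S. smult (c j) (f j)) = (\<Sum>j\<in>S. c j * L (f j))"
proof (induction S rule: infinite_finite_induct)
  case (infinite A)
  have "L 0 = 0" using assms unfolding linf_def by (metis mult_zero_left smult_0_left)
  then show ?case using infinite by simp
next
  case empty
  have "L 0 = 0" using assms unfolding linf_def by (metis mult_zero_left smult_0_left)
  then show ?case by simp
next
  case (insert x F)
  then show ?case using assms unfolding linf_def by simp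
qed

lemma linf_W: "linf (\<lambda>q. poly ((pderiv ^^ i) q) x)"
  unfolding linf_def by (simp add: higher_pderiv_add higher_pderiv_smult)

lemma linf_C: "linf (\<lambda>q. poly q (x + real i))"
  unfolding linf_def by simp

lemma Lmat_transform:
  assumes L: "\<forall>i. linf (L i)"
    and q: "\<forall>j\<le>m. q j = (\<Sum>k\<le>m. smult (c j k) (p k))"
  shows "mat (Suc m) (Suc m) (\<lambda>(i,j). L i (q j)) =
         mat (Suc m) (Suc m) (\<lambda>(i,j). L i (p j)) * mat (Suc m) (Suc m) (\<lambda>(k,j). c j k)"
proof (rule eq_matI)
  fix i j assume i: "i < dim_row (mat (Suc m) (Suc m) (\<lambda>(i,j). L i (p j)) * mat (Suc m) (Suc m) (\<lambda>(k,j). c j k))"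
    and j: "j < dim_col (mat (Suc m) (Suc m) (\<lambda>(i,j). L i (p j)) * mat (Suc m) (Suc m) (\<lambda>(k,j). c j k))"
  then have i': "i < Suc m" and j': "j < Suc m" by auto
  have "L i (q j) = (\<Sum>k\<le>m. c j k * L i (p k))" using q j' linf_sum[OF spec[OF L, of i]] by simp
  also have "\<dots> = (\<Sum>k\<in>{0..<Suc m}. L i (p k) * c j k)"
    by (simp add: atLeast0LessThan lessThan_Suc_atMost mult.commute)
  finally show "mat (Suc m) (Suc m) (\<lambda>(i,j). L i (q j)) $$ (i, j) =
     (mat (Suc m) (Suc m) (\<lambda>(i,j). L i (p j)) * mat (Suc m) (Suc m) (\<lambda>(k,j). c j k)) $$ (i, j)"
    using i' j' by (simp add: scalar_prod_def)
qed auto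

lemma Lmat_dep:
  assumes L: "\<forall>i. linf (L i)"
    and dep: "poly_lin_dep p m"
  shows "det (mat (Suc m) (Suc m) (\<lambda>(i,j). L i (p j))) = 0"
proof -
  let ?M = "mat (Suc m) (Suc m) (\<lambda>(i,j). L i (p j))"
  obtain c where c: "\<exists>i\<le>m. c i \<noteq> 0" "(\<Sum>i\<le>m. smult (c i) (p i)) = 0"
    using dep unfolding poly_lin_dep_def by blast
  let ?v = "vec (Suc m) c"
  have "?M *\<^sub>v ?v = 0\<^sub>v (Suc m)"
  proof (rule eq_vecI)
    fix i assume "i < dim_vec (0\<^sub>v (Suc m) :: real vec)"
    then have i: "i < Suc m" by simp
    have "(?M *\<^sub>v ?v) $ i = (\<Sum>j\<in>{0..<Suc m}. L i (p j) * c j)"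
      using i by (simp add: scalar_prod_def)
    also have "\<dots> = L i (\<Sum>j\<le>m. smult (c j) (p j))"
      using linf_sum[OF spec[OF L, of i], of c p "{..m}"]
      by (simp add: atLeast0LessThan lessThan_Suc_atMost mult.commute)
    also have "\<dots> = 0" using c(2) linf_sum[OF spec[OF L, of i], of c p "{}"] by simp
    finally show "(?M *\<^sub>v ?v) $ i = 0\<^sub>v (Suc m) $ i" using i by simp
  qed simp
  moreover have "?v \<noteq> 0\<^sub>v (Suc m)"
  proof
    assume "?v = 0\<^sub>v (Suc m)"
    then have "\<forall>i<Suc m. c i = 0" by (metis index_vec index_zero_vec(1))
    then show False using c(1) by auto
  qed
  ultimately show ?thesis
    using det_0_iff_vec_prod_zero[of ?M "Suc m"] vec_carrier[of "Suc m" c] mat_carrier by blast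
qed

lemma dep_zero:
  assumes "poly_lin_dep p m"
  shows "wronskian p m x = 0 \<and> casoratian p m x = 0"
  using Lmat_dep[of "\<lambda>i q. poly ((pderiv ^^ i) q) x", OF _ assms]
        Lmat_dep[of "\<lambda>i q. poly q (x + real i)", OF _ assms] linf_W linf_C
  unfolding wronskian_def casoratian_def by auto

lemma transform_eq:
  assumes q: "\<forall>j\<le>m. q j = (\<Sum>k\<le>m. smult (c j k) (p k))"
  shows "wronskian q m x = wronskian p m x * det (mat (Suc m) (Suc m) (\<lambda>(k,j). c j k))"
    and "casoratian q m x = casoratian p m x * det (mat (Suc m) (Suc m) (\<lambda>(k,j). c j k))"
proof -
  have W: "Wm q m x = Wm p m x * mat (Suc m) (Suc m) (\<lambda>(k,j). c j k)"
    using Lmat_transform[of "\<lambda>i q. poly ((pderiv ^^ i) q) x", OF _ q] linf_W by auto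
  have C: "Cm q m x = Cm p m x * mat (Suc m) (Suc m) (\<lambda>(k,j). c j k)"
    using Lmat_transform[of "\<lambda>i q. poly q (x + real i)", OF _ q] linf_C by auto
  show "wronskian q m x = wronskian p m x * det (mat (Suc m) (Suc m) (\<lambda>(k,j). c j k))"
    unfolding wronskian_def W by (rule det_mult) auto
  show "casoratian q m x = casoratian p m x * det (mat (Suc m) (Suc m) (\<lambda>(k,j). c j k))"
    unfolding casoratian_def C by (rule det_mult) auto
qed


lemma smult_sum_right: "smult a (sum f S) = (\<Sum>i\<in>S. smult a (f i))"
  by (induction S rule: infinite_finite_induct) (simp_all add: smult_add_right)

definition inspan :: "(nat \<Rightarrow> real poly) \<Rightarrow> nat set \<Rightarrow> real poly \<Rightarrow> bool" where
  "inspan p I v \<longleftrightarrow> (\<exists>c. v = (\<Sum>i\<in>I. smult (c i) (p i)))"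
definition indep :: "(nat \<Rightarrow> real poly) \<Rightarrow> nat set \<Rightarrow> bool" where
  "indep p I \<longleftrightarrow> (\<forall>c. (\<Sum>i\<in>I. smult (c i) (p i)) = 0 \<longrightarrow> (\<forall>i\<in>I. c i = 0))"

lemma sum_delta_smult:
  assumes "finite I" "k \<in> I"
  shows "(\<Sum>i\<in>I. smult (if i = k then a else 0) (p i)) = smult a (p k)"
proof -
  have "(\<Sum>i\<in>I. smult (if i = k then a else 0) (p i)) = (\<Sum>i\<in>I. if i = k then smult a (p i) else 0)"
    by (rule sum.cong) auto
  also have "\<dots> = smult a (p k)" using assms by (simp add: sum.delta)
  finally show ?thesis .
qed

lemma inspan_base: "finite I \<Longrightarrow> k \<in> I \<Longrightarrow> inspan p I (p k)"
  unfolding inspan_def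
  by (rule exI[of _ "\<lambda>i. if i = k then 1 else 0"]) (simp add: sum_delta_smult)

lemma inspan_diff: "inspan p I u \<Longrightarrow> inspan p I v \<Longrightarrow> inspan p I (u - v)"
  unfolding inspan_def
proof (elim exE)
  fix c d assume u: "u = (\<Sum>i\<in>I. smult (c i) (p i))" and v: "v = (\<Sum>i\<in>I. smult (d i) (p i))"
  show "\<exists>e. u - v = (\<Sum>i\<in>I. smult (e i) (p i))"
    by (rule exI[of _ "\<lambda>i. c i - d i"]) (simp add: u v smult_diff_left sum_subtractf)
qed

lemma inspan_smult: "inspan p I u \<Longrightarrow> inspan p I (smult a u)"
  unfolding inspan_def
proof (elim exE)
  fix c assume u: "u = (\<Sum>i\<in>I. smult (c i) (p i))"
  show "\<exists>e. smult a u = (\<Sum>i\<in>I. smult (e i) (p i))"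
    by (rule exI[of _ "\<lambda>i. a * c i"]) (simp add: u smult_sum_right)
qed

lemma inspan_trans:
  assumes fJ: "finite J" and base: "\<forall>k\<in>J. inspan p I (p' k)" and v: "inspan p' J v"
  shows "inspan p I v"
proof -
  from base obtain C where C: "\<forall>k\<in>J. p' k = (\<Sum>i\<in>I. smult (C k i) (p i))"
    unfolding inspan_def by metis
  from v obtain d where d: "v = (\<Sum>k\<in>J. smult (d k) (p' k))" unfolding inspan_def by blast
  have "v = (\<Sum>k\<in>J. \<Sum>i\<in>I. smult (d k * C k i) (p i))"
    unfolding d using C by (intro sum.cong) (auto simp: smult_sum_right)
  also have "\<dots> = (\<Sum>i\<in>I. \<Sum>k\<in>J. smult (d k * C k i) (p i))" by (rule sum.swap)
  also have "\<dots> = (\<Sum>i\<in>I. smult (\<Sum>k\<in>J. d k * C k i) (p i))" by (simp add: smult_sum)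
  finally show ?thesis unfolding inspan_def by (rule exI[of _ "\<lambda>i. \<Sum>k\<in>J. d k * C k i"])
qed

lemma degree_inspan:
  assumes "\<forall>i\<in>I. degree (p i) \<le> n" "inspan p I v"
  shows "degree v \<le> n"
proof -
  from assms(2) obtain c where v: "v = (\<Sum>i\<in>I. smult (c i) (p i))" unfolding inspan_def by blast
  show ?thesis unfolding v
  proof (cases "finite I")
    case True
    show "degree (\<Sum>i\<in>I. smult (c i) (p i)) \<le> n"
      by (rule degree_sum_le[OF True]) (use assms(1) degree_smult_le order_trans in blast)
  qed simp
qed

lemma indep_nz: "finite I \<Longrightarrow> indep p I \<Longrightarrow> k \<in> I \<Longrightarrow> p k \<noteq> 0"
proof
  assume f: "finite I" and ind: "indep p I" and k: "k \<in> I" and z: "p k = 0"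
  have "(\<Sum>i\<in>I. smult (if i = k then 1 else 0) (p i)) = 0" using sum_delta_smult[OF f k, of 1 p] z by simp
  then have "(if k = k then (1::real) else 0) = 0"
    using ind[unfolded indep_def, rule_format, of "\<lambda>i. if i = k then 1 else 0"] k by blast
  then show False by simp
qed

lemma reduce:
  assumes "finite I" "indep p I"
  shows "\<exists>q. (\<forall>j\<in>I. inspan p I (q j)) \<and> inj_on (\<lambda>j. degree (q j)) I \<and> (\<forall>j\<in>I. q j \<noteq> 0) \<and>
             (\<forall>i\<in>I. \<exists>j\<in>I. degree (p i) \<le> degree (q j))"
  using assms
proof (induction I arbitrary: p rule: finite_psubset_induct)
  case (psubset I)
  show ?case
  proof (cases "I = {}")
    case True then show ?thesis by auto
  next
    case False
    obtain i0 where i0: "i0 \<in> I" "\<forall>i\<in>I. degree (p i) \<le> degree (p i0)"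
    proof -
      have "Max ((\<lambda>i. degree (p i)) ` I) \<in> (\<lambda>i. degree (p i)) ` I"
        using False psubset.hyps by (intro Max_in) auto
      then obtain i0 where "i0 \<in> I" "degree (p i0) = Max ((\<lambda>i. degree (p i)) ` I)" by auto
      then show ?thesis using that psubset.hyps by auto
    qed
    define n0 where "n0 = degree (p i0)"
    define l0 where "l0 = lead_coeff (p i0)"
    have pi0: "p i0 \<noteq> 0" using indep_nz[OF psubset.hyps psubset.prems i0(1)] .
    then have l0: "l0 \<noteq> 0" unfolding l0_def by simp
    define a where "a j = coeff (p j) n0 / l0" for j
    define p' where "p' j = p j - smult (a j) (p i0)" for j
    define I' where "I' = I - {i0}"
    have I'sub: "I' \<subset> I" unfolding I'_def using i0 by auto
    have fI': "finite I'" unfolding I'_def using psubset.hyps by simp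
    have ind': "indep p' I'"
      unfolding indep_def
    proof (intro allI impI)
      fix c assume c0: "(\<Sum>j\<in>I'. smult (c j) (p' j)) = 0"
      define c' where "c' = c(i0 := - (\<Sum>j\<in>I'. c j * a j))"
      have "(\<Sum>j\<in>I'. smult (c j) (p' j)) =
            (\<Sum>j\<in>I'. smult (c j) (p j)) - smult (\<Sum>j\<in>I'. c j * a j) (p i0)"
        unfolding p'_def by (simp add: smult_diff_right sum_subtractf smult_sum)
      also have "\<dots> = (\<Sum>i\<in>I. smult (c' i) (p i))"
      proof -
        have II: "I = insert i0 I'" "i0 \<notin> I'" unfolding I'_def using i0 by auto
        then have "(\<Sum>i\<in>I. smult (c' i) (p i)) = smult (c' i0) (p i0) + (\<Sum>i\<in>I'. smult (c' i) (p i))"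
          using fI' by simp
        also have "(\<Sum>i\<in>I'. smult (c' i) (p i)) = (\<Sum>i\<in>I'. smult (c i) (p i))"
          unfolding c'_def I'_def by (intro sum.cong) auto
        finally show ?thesis unfolding c'_def by simp
      qed
      finally have "(\<Sum>i\<in>I. smult (c' i) (p i)) = 0" using c0 by simp
      then have "\<forall>i\<in>I. c' i = 0" using psubset.prems unfolding indep_def by blast
      then show "\<forall>i\<in>I'. c i = 0"
      proof (intro ballI)
        fix i assume h: "\<forall>i\<in>I. c' i = 0" and i: "i \<in> I'"
        then have "i \<in> I" "i \<noteq> i0" unfolding I'_def by auto
        then show "c i = 0" using h unfolding c'_def by (metis fun_upd_other)
      qed
    qed
    obtain q' where q': "\<forall>j\<in>I'. inspan p' I' (q' j)" "inj_on (\<lambda>j. degree (q' j)) I'"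
        "\<forall>j\<in>I'. q' j \<noteq> 0"
      using psubset.IH[OF I'sub ind'] by blast
    have p'deg: "\<forall>j\<in>I'. degree (p' j) < n0"
    proof
      fix j assume j: "j \<in> I'"
      have nz: "p' j \<noteq> 0" using indep_nz[OF fI' ind' j] .
      have jI: "j \<in> I" using j I'sub by auto
      have dle: "degree (p' j) \<le> n0"
        unfolding p'_def n0_def
        using i0(2) jI degree_smult_le[of "a j" "p i0"] by (intro degree_diff_le) auto
      have "coeff (p' j) n0 = 0" unfolding p'_def a_def l0_def n0_def using l0 l0_def by simp
      then show "degree (p' j) < n0" using dle nz
        by (metis le_neq_implies_less leading_coeff_0_iff)
    qed
    have q'deg: "\<forall>j\<in>I'. degree (q' j) < n0"
    proof
      fix j assume j: "j \<in> I'"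
      then have "0 < n0" using p'deg by fastforce
      have "\<forall>i\<in>I'. degree (p' i) \<le> n0 - 1" using p'deg by fastforce
      then have "degree (q' j) \<le> n0 - 1" using degree_inspan q' j by blast
      then show "degree (q' j) < n0" using \<open>0 < n0\<close> by linarith
    qed
    define q where "q = q'(i0 := p i0)"
    have p'span: "\<forall>k\<in>I'. inspan p I (p' k)"
      unfolding p'_def using I'sub psubset.hyps i0(1)
      by (auto intro!: inspan_diff inspan_smult inspan_base)
    have A: "\<forall>j\<in>I. inspan p I (q j)"
    proof
      fix j assume j: "j \<in> I"
      show "inspan p I (q j)"
      proof (cases "j = i0")
        case True then show ?thesis unfolding q_def using inspan_base[OF psubset.hyps i0(1)] by simp
      next
        case False
        then have "j \<in> I'" unfolding I'_def using j by auto
        then show ?thesis unfolding q_def using False inspan_trans[OF fI' p'span] q'(1) by simp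
      qed
    qed
    have B: "inj_on (\<lambda>j. degree (q j)) I"
    proof (rule inj_onI)
      fix j k assume j: "j \<in> I" and k: "k \<in> I" and e: "degree (q j) = degree (q k)"
      show "j = k"
      proof (cases "j = i0"; cases "k = i0")
        assume "j = i0" "k = i0" then show ?thesis by simp
      next
        assume a1: "j = i0" "k \<noteq> i0"
        then have "k \<in> I'" unfolding I'_def using k by auto
        then show ?thesis using e a1 q'deg unfolding q_def n0_def by auto
      next
        assume a1: "j \<noteq> i0" "k = i0"
        then have "j \<in> I'" unfolding I'_def using j by auto
        then show ?thesis using e a1 q'deg unfolding q_def n0_def by auto
      next
        assume a1: "j \<noteq> i0" "k \<noteq> i0"
        then have "j \<in> I'" "k \<in> I'" unfolding I'_def using j k by auto
        then show ?thesis using e a1 q'(2) unfolding q_def by (auto dest: inj_onD)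
      qed
    qed
    have C: "\<forall>j\<in>I. q j \<noteq> 0" unfolding q_def using q'(3) pi0 I'_def by auto
    have D: "\<forall>i\<in>I. \<exists>j\<in>I. degree (p i) \<le> degree (q j)"
      using i0 unfolding q_def by auto
    show ?thesis using A B C D by blast
  qed
qed

definition Tri :: "nat \<Rightarrow> nat" where "Tri r = (\<Sum>i<r. i)"

lemma sum_card_bound:
  "finite A \<Longrightarrow> card A = r \<Longrightarrow> Tri r \<le> \<Sum>A \<and> (\<Sum>A = Tri r \<longrightarrow> A = {..<r}) \<and>
     (\<Sum>A = Tri r + 1 \<longrightarrow> A = insert r {..<r - 1})"
proof (induction r arbitrary: A)
  case 0 then show ?case by (simp add: Tri_def)
next
  case (Suc s)
  have ne: "A \<noteq> {}" using Suc.prems by auto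
  define a where "a = Max A"
  have aA: "a \<in> A" unfolding a_def using Suc.prems ne by simp
  define A' where "A' = A - {a}"
  have fA': "finite A'" unfolding A'_def using Suc.prems by simp
  have cA': "card A' = s" unfolding A'_def using Suc.prems aA by simp
  have sub: "A \<subseteq> {..a}" unfolding a_def using Suc.prems by auto
  have "Suc s \<le> Suc a" using card_mono[OF _ sub] Suc.prems by simp
  then have as: "s \<le> a" by simp
  have sumA: "\<Sum>A = a + \<Sum>A'" unfolding A'_def using Suc.prems aA by (simp add: sum.remove)
  have TS: "Tri (Suc s) = Tri s + s" by (simp add: Tri_def)
  note IH = Suc.IH[OF fA' cA']
  have AA': "A = insert a A'" unfolding A'_def using aA by auto
  have aA': "a \<notin> A'" unfolding A'_def by simp
  show ?case
  proof (intro conjI impI)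
    show "Tri (Suc s) \<le> \<Sum>A" using IH sumA TS as by linarith
  next
    assume e: "\<Sum>A = Tri (Suc s)"
    then have "a = s" "\<Sum>A' = Tri s" using IH sumA TS as by linarith+
    then show "A = {..<Suc s}" using IH AA' by auto
  next
    assume e: "\<Sum>A = Tri (Suc s) + 1"
    then have "(a = Suc s \<and> \<Sum>A' = Tri s) \<or> (a = s \<and> \<Sum>A' = Tri s + 1)"
      using IH sumA TS as by linarith
    then show "A = insert (Suc s) {..<Suc s - 1}"
    proof
      assume "a = Suc s \<and> \<Sum>A' = Tri s"
      then show ?thesis using IH AA' by auto
    next
      assume h: "a = s \<and> \<Sum>A' = Tri s + 1"
      then have "A' = insert s {..<s - 1}" using IH by blast
      then have "a \<in> A'" using h by simp
      then show ?thesis using aA' by simp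
    qed
  qed
qed


lemma coeff_mult_le:
  fixes p q :: "real poly"
  assumes "degree p \<le> a" "degree q \<le> b"
  shows "coeff (p * q) (a + b) = coeff p a * coeff q b"
proof (cases "degree p = a \<and> degree q = b")
  case True then show ?thesis using coeff_mult_degree_sum[of p q] by simp
next
  case False
  then have lt: "degree p + degree q < a + b" using assms by linarith
  have "degree (p * q) < a + b" using degree_mult_le[of p q] lt by linarith
  then have "coeff (p * q) (a + b) = 0" by (simp add: coeff_eq_0)
  moreover have "coeff p a * coeff q b = 0" using False assms
    by (metis coeff_eq_0 le_neq_implies_less mult_eq_0_iff)
  ultimately show ?thesis by simp
qed

lemma coeff_prod_le:
  fixes g :: "nat \<Rightarrow> real poly"
  assumes "finite J" "\<forall>j\<in>J. degree (g j) \<le> k j"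
  shows "coeff (\<Prod>j\<in>J. g j) (\<Sum>j\<in>J. k j) = (\<Prod>j\<in>J. coeff (g j) (k j))"
  using assms
proof (induction J rule: finite_induct)
  case empty then show ?case by simp
next
  case (insert a J)
  have "degree (\<Prod>j\<in>J. g j) \<le> (\<Sum>j\<in>J. k j)"
    using degree_prod_sum_le[OF insert(1), of g] insert(4) sum_mono[of J "\<lambda>j. degree (g j)" k]
    by (simp add: o_def)
  then have "coeff (g a * (\<Prod>j\<in>J. g j)) (k a + (\<Sum>j\<in>J. k j)) = coeff (g a) (k a) * coeff (\<Prod>j\<in>J. g j) (\<Sum>j\<in>J. k j)"
    using insert by (intro coeff_mult_le) auto
  then show ?case using insert by simp
qed

definition cV :: "nat \<Rightarrow> (nat \<Rightarrow> nat) \<Rightarrow> real" where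
  "cV r f = det (mat r r (\<lambda>(i,j). real i ^ f j / fact (f j)))"
definition cI :: "nat \<Rightarrow> (nat \<Rightarrow> nat) \<Rightarrow> real" where
  "cI r f = det (mat r r (\<lambda>(i,j). if i = f j then 1 else 0))"

lemma det_noninj:
  assumes "\<not> inj_on f {0..<r}"
  shows "det (mat r r (\<lambda>(i,j). G i (f j) :: real)) = 0"
proof -
  obtain j1 j2 where j: "j1 < r" "j2 < r" "j1 \<noteq> j2" "f j1 = f j2"
    using assms unfolding inj_on_def by auto
  show ?thesis
  proof (rule det_identical_columns[OF _ j(3) j(1) j(2)])
    show "col (mat r r (\<lambda>(i,j). G i (f j))) j1 = col (mat r r (\<lambda>(i,j). G i (f j))) j2"
      using j by (intro eq_vecI) auto
  qed auto
qed

lemma cV_eq_cI: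
  assumes "\<forall>j<Suc m. f j < Suc m"
  shows "cV (Suc m) f = cI (Suc m) f"
proof -
  let ?r = "Suc m"
  let ?S = "mat ?r ?r (\<lambda>(k,j). if k = f j then 1 else 0) :: real mat"
  have eqM: "mat ?r ?r (\<lambda>(i,j). real i ^ f j / fact (f j)) = Vm ?r ?r * ?S"
  proof (rule eq_matI)
    fix i j assume "i < dim_row (Vm ?r ?r * ?S)" "j < dim_col (Vm ?r ?r * ?S)"
    then have i: "i < ?r" and j: "j < ?r" by (auto simp: Vm_def)
    have "(Vm ?r ?r * ?S) $$ (i,j) = (\<Sum>k\<in>{0..<?r}. real i ^ k / fact k * (if k = f j then 1 else 0))"
      using i j by (simp add: Vm_def scalar_prod_def)
    also have "\<dots> = (\<Sum>k\<in>{0..<?r}. if k = f j then real i ^ k / fact k else 0)"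
      by (rule sum.cong) auto
    also have "\<dots> = real i ^ f j / fact (f j)" using assms j by (subst sum.delta) auto
    finally show "mat ?r ?r (\<lambda>(i,j). real i ^ f j / fact (f j)) $$ (i,j) = (Vm ?r ?r * ?S) $$ (i,j)"
      using i j by simp
  qed (auto simp: Vm_def)
  have "cV ?r f = det (Vm ?r ?r * ?S)" unfolding cV_def eqM ..
  also have "\<dots> = det (Vm ?r ?r) * det ?S" by (rule det_mult) (auto simp: Vm_def)
  finally have "cV ?r f = det (Vm ?r ?r) * det ?S" .
  then show ?thesis unfolding cI_def using det_Vm by simp
qed

lemma cI_zero:
  assumes "j0 < r" "r \<le> f j0"
  shows "cI r f = 0"
proof -
  let ?M = "mat r r (\<lambda>(i,j). if i = f j then 1 else 0) :: real mat"
  have "?M *\<^sub>v unit_vec r j0 = 0\<^sub>v r"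
  proof (rule eq_vecI)
    fix i assume "i < dim_vec (0\<^sub>v r :: real vec)"
    then have i: "i < r" by simp
    have "(?M *\<^sub>v unit_vec r j0) $ i = row ?M i $ j0"
      using i assms(1) by (simp add: scalar_prod_right_unit)
    also have "\<dots> = 0" using i assms by simp
    finally show "(?M *\<^sub>v unit_vec r j0) $ i = 0\<^sub>v r $ i" using i by simp
  qed simp
  moreover have "unit_vec r j0 \<noteq> (0\<^sub>v r :: real vec)"
  proof
    assume "unit_vec r j0 = (0\<^sub>v r :: real vec)"
    then have "unit_vec r j0 $ j0 = (0\<^sub>v r :: real vec) $ j0" by simp
    then show False using assms(1) by simp
  qed
  ultimately have "det ?M = 0"
    using det_0_iff_vec_prod_zero[of ?M r] unit_vec_carrier[of r j0] mat_carrier by blast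
  then show ?thesis unfolding cI_def .
qed


lemma inj_sum_image:
  assumes "inj_on f {0..<r}"
  shows "(\<Sum>j\<in>{0..<r}. f j) = \<Sum>(f ` {0..<r})" "card (f ` {0..<r}) = r"
  using assms by (simp_all add: sum.reindex card_image)

lemma per_f:
  fixes q :: "nat \<Rightarrow> real poly"
  assumes f: "f \<in> FS (Suc m) s"
    and SgT: "Tri (Suc m) + 1 \<le> (\<Sum>j\<in>{0..<Suc m}. degree (q j))"
  shows "coeff (smult (cV (Suc m) f - cI (Suc m) f) (\<Prod>j\<in>{0..<Suc m}. (pderiv ^^ f j) (q j)))
           ((\<Sum>j\<in>{0..<Suc m}. degree (q j)) - (Tri (Suc m) + 1)) =
         (if (\<Sum>j\<in>{0..<Suc m}. f j) = Tri (Suc m) + 1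
          then cV (Suc m) f * (\<Prod>j\<in>{0..<Suc m}. poly (ff (f j)) (real (degree (q j))) * lead_coeff (q j))
          else 0)"
proof -
  let ?r = "Suc m"
  let ?S = "\<Sum>j\<in>{0..<?r}. degree (q j)"
  let ?Sf = "\<Sum>j\<in>{0..<?r}. f j"
  let ?P = "\<Prod>j\<in>{0..<?r}. (pderiv ^^ f j) (q j)"
  let ?B = "\<Prod>j\<in>{0..<?r}. poly (ff (f j)) (real (degree (q j))) * lead_coeff (q j)"
  have TriR: "Tri ?r = \<Sum>{0..<?r}" unfolding Tri_def by (simp add: atLeast0LessThan)
  show ?thesis
  proof (cases "\<forall>j<?r. f j < ?r")
    case True
    have "cV ?r f = cI ?r f" by (rule cV_eq_cI[OF True])
    moreover have "?Sf = Tri ?r + 1 \<Longrightarrow> cV ?r f = 0"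
    proof -
      assume sf: "?Sf = Tri ?r + 1"
      have "\<not> inj_on f {0..<?r}"
      proof
        assume inj: "inj_on f {0..<?r}"
        have "f ` {0..<?r} \<subseteq> {0..<?r}" using True by auto
        then have "f ` {0..<?r} = {0..<?r}"
          using inj_sum_image(2)[OF inj] by (intro card_subset_eq) auto
        then have "?Sf = Tri ?r" using inj_sum_image(1)[OF inj] TriR by simp
        then show False using sf by simp
      qed
      then show "cV ?r f = 0" unfolding cV_def by (rule det_noninj)
    qed
    ultimately show ?thesis by auto
  next
    case False
    then obtain j0 where j0: "j0 < ?r" "?r \<le> f j0" by auto
    have cI0: "cI ?r f = 0" using cI_zero[of j0 ?r f] j0 by blast
    show ?thesis
    proof (cases "inj_on f {0..<?r}")
      case False
      then have "cV ?r f = 0" unfolding cV_def by (rule det_noninj)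
      then show ?thesis using cI0 by simp
    next
      case inj: True
      note bnd = sum_card_bound[OF _ inj_sum_image(2)[OF inj]]
      have sfge: "Tri ?r + 1 \<le> ?Sf"
      proof -
        have "Tri ?r \<le> ?Sf" using bnd inj_sum_image(1)[OF inj] by simp
        moreover have "?Sf \<noteq> Tri ?r"
        proof
          assume "?Sf = Tri ?r"
          then have "f ` {0..<?r} = {..<?r}" using bnd inj_sum_image(1)[OF inj] by simp
          moreover have "f j0 \<in> f ` {0..<?r}" using j0 by auto
          ultimately show False using j0 by auto
        qed
        ultimately show ?thesis by linarith
      qed
      show ?thesis
      proof (cases "\<exists>j<?r. degree (q j) < f j")
        case True
        then obtain j1 where j1: "j1 < ?r" "degree (q j1) < f j1" by auto
        have P0: "?P = 0" using j1 higher_pderiv_zero[OF j1(2)] by (intro prod_zero) auto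
        have B0: "?B = 0" using j1 poly_ff_zero[OF j1(2)] by (intro prod_zero) auto
        show ?thesis unfolding P0 B0 by simp
      next
        case False
        then have fle: "\<forall>j<?r. f j \<le> degree (q j)" using not_less by blast
        have degP: "degree ?P \<le> (\<Sum>j\<in>{0..<?r}. degree (q j) - f j)"
          using degree_prod_sum_le[of "{0..<?r}" "\<lambda>j. (pderiv ^^ f j) (q j)"]
          by (simp add: o_def degree_higher_pderiv)
        have sumsub: "(\<Sum>j\<in>{0..<?r}. degree (q j) - f j) = ?S - ?Sf"
          using fle by (intro sum_subtractf_nat) auto
        have SSf: "?Sf \<le> ?S" using fle by (intro sum_mono) auto
        show ?thesis
        proof (cases "?Sf = Tri ?r + 1")
          case True
          have "coeff ?P (\<Sum>j\<in>{0..<?r}. degree (q j) - f j) =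
                (\<Prod>j\<in>{0..<?r}. coeff ((pderiv ^^ f j) (q j)) (degree (q j) - f j))"
            by (rule coeff_prod_le) (auto simp: degree_higher_pderiv)
          also have "\<dots> = ?B" by (simp add: coeff_higher_pderiv_top)
          finally have "coeff ?P (?S - (Tri ?r + 1)) = ?B" using sumsub True by simp
          then show ?thesis using True cI0 by simp
        next
          case False
          then have "degree ?P < ?S - (Tri ?r + 1)" using degP sumsub SSf sfge SgT by linarith
          then have "coeff ?P (?S - (Tri ?r + 1)) = 0" by (rule coeff_eq_0)
          then show ?thesis using False by simp
        qed
      qed
    qed
  qed
qed


lemma finite_FS: "finite (FS r s)"
  unfolding FS_def by (rule finite_bounded_functions) auto

lemma reindex_K:
  fixes b :: "nat \<Rightarrow> nat \<Rightarrow> real"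
  assumes mn: "m < n"
  shows "(\<Sum>f\<in>FS (Suc m) (Suc n). if (\<Sum>j\<in>{0..<Suc m}. f j) = Tri (Suc m) + 1
            then cV (Suc m) f * (\<Prod>j\<in>{0..<Suc m}. b (f j) j) else 0)
       = det (mat (Suc m) (Suc m) (\<lambda>(i,l). real i ^ (if l < m then l else Suc m) / fact (if l < m then l else Suc m)) *
              mat (Suc m) (Suc m) (\<lambda>(l,j). b (if l < m then l else Suc m) j))"
proof -
  let ?r = "Suc m"
  let ?s = "Suc n"
  define \<kappa> where "\<kappa> l = (if l < m then l else Suc m)" for l
  define h where "h f = (if (\<Sum>j\<in>{0..<?r}. f j) = Tri ?r + 1
            then cV ?r f * (\<Prod>j\<in>{0..<?r}. b (f j) j) else 0)" for f
  define comp where "comp g = (\<lambda>i. if i < ?r then \<kappa> (g i) else i)" for g :: "nat \<Rightarrow> nat"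
  let ?VK = "mat ?r ?r (\<lambda>(i,l). real i ^ \<kappa> l / fact (\<kappa> l))"
  let ?BK = "mat ?r ?r (\<lambda>(l,j). b (\<kappa> l) j)"
  have kinj: "\<And>a c. a < ?r \<Longrightarrow> c < ?r \<Longrightarrow> \<kappa> a = \<kappa> c \<Longrightarrow> a = c"
    unfolding \<kappa>_def by (auto split: if_splits)
  have ksum: "(\<Sum>l\<in>{0..<?r}. \<kappa> l) = Tri ?r + 1"
  proof -
    have "(\<Sum>l\<in>{0..<?r}. \<kappa> l) = (\<Sum>l\<in>{0..<m}. \<kappa> l) + \<kappa> m" by simp
    also have "(\<Sum>l\<in>{0..<m}. \<kappa> l) = (\<Sum>l\<in>{0..<m}. l)" unfolding \<kappa>_def by (intro sum.cong) auto
    finally show ?thesis unfolding Tri_def \<kappa>_def by (simp add: atLeast0LessThan)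
  qed
  have step1: "det (?VK * ?BK) = (\<Sum>g\<in>FS ?r ?r. h (comp g))"
  proof -
    have "det (?VK * ?BK) = (\<Sum>g\<in>FS ?r ?r. (\<Prod>j\<in>{0..<?r}. ?BK $$ (g j, j)) * det (mat ?r ?r (\<lambda>(i,j). ?VK $$ (i, g j))))"
      by (rule det_mult_expand) auto
    also have "\<dots> = (\<Sum>g\<in>FS ?r ?r. h (comp g))"
    proof (rule sum.cong[OF refl])
      fix g assume g: "g \<in> FS ?r ?r"
      have gr: "\<And>j. j < ?r \<Longrightarrow> g j < ?r" using g unfolding FS_def by auto
      have e1: "(\<Prod>j\<in>{0..<?r}. ?BK $$ (g j, j)) = (\<Prod>j\<in>{0..<?r}. b (comp g j) j)"
        unfolding comp_def using gr by (intro prod.cong) auto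
      have e2: "mat ?r ?r (\<lambda>(i,j). ?VK $$ (i, g j)) = mat ?r ?r (\<lambda>(i,j). real i ^ comp g j / fact (comp g j))"
        unfolding comp_def using gr by (intro eq_matI) auto
      show "(\<Prod>j\<in>{0..<?r}. ?BK $$ (g j, j)) * det (mat ?r ?r (\<lambda>(i,j). ?VK $$ (i, g j))) = h (comp g)"
      proof (cases "inj_on g {0..<?r}")
        case True
        have "g ` {0..<?r} \<subseteq> {0..<?r}" using gr by auto
        then have gim: "g ` {0..<?r} = {0..<?r}"
          using True by (intro card_subset_eq) (auto simp: card_image)
        have "(\<Sum>j\<in>{0..<?r}. comp g j) = (\<Sum>j\<in>{0..<?r}. \<kappa> (g j))"
          unfolding comp_def by (intro sum.cong) auto
        also have "\<dots> = (\<Sum>l\<in>g ` {0..<?r}. \<kappa> l)" using True by (simp add: sum.reindex)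
        also have "\<dots> = Tri ?r + 1" using gim ksum by simp
        finally show ?thesis unfolding h_def e1 e2 cV_def by simp
      next
        case False
        then have ni: "\<not> inj_on (comp g) {0..<?r}"
          unfolding inj_on_def comp_def by (metis atLeastLessThan_iff zero_le)
        have "det (mat ?r ?r (\<lambda>(i,j). real i ^ comp g j / fact (comp g j))) = 0"
          by (rule det_noninj[OF ni])
        then show ?thesis unfolding h_def e2 cV_def by simp
      qed
    qed
    finally show ?thesis .
  qed
  have injc: "inj_on comp (FS ?r ?r)"
  proof (rule inj_onI)
    fix g1 g2 assume g1: "g1 \<in> FS ?r ?r" and g2: "g2 \<in> FS ?r ?r" and e: "comp g1 = comp g2"
    show "g1 = g2"
    proof
      fix i show "g1 i = g2 i"
      proof (cases "i < ?r")
        case True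
        then have "\<kappa> (g1 i) = \<kappa> (g2 i)" using e unfolding comp_def by (metis (full_types))
        moreover have "g1 i < ?r" "g2 i < ?r" using g1 g2 True unfolding FS_def by auto
        ultimately show ?thesis using kinj by blast
      next
        case False then show ?thesis using g1 g2 unfolding FS_def by auto
      qed
    qed
  qed
  have sub: "comp ` FS ?r ?r \<subseteq> FS ?r ?s"
  proof
    fix f assume "f \<in> comp ` FS ?r ?r"
    then obtain g where "g \<in> FS ?r ?r" "f = comp g" by auto
    then show "f \<in> FS ?r ?s" unfolding FS_def comp_def \<kappa>_def using mn by auto
  qed
  have zero: "\<forall>f\<in>FS ?r ?s - comp ` FS ?r ?r. h f = 0"
  proof
    fix f assume f: "f \<in> FS ?r ?s - comp ` FS ?r ?r"
    show "h f = 0"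
    proof (rule ccontr)
      assume hne: "h f \<noteq> 0"
      then have sf: "(\<Sum>j\<in>{0..<?r}. f j) = Tri ?r + 1" and cne: "cV ?r f \<noteq> 0"
        unfolding h_def by (auto split: if_splits)
      have inj: "inj_on f {0..<?r}"
      proof (rule ccontr)
        assume "\<not> inj_on f {0..<?r}"
        then have "cV ?r f = 0" unfolding cV_def by (rule det_noninj)
        then show False using cne by simp
      qed
      have im: "f ` {0..<?r} = insert ?r {..<m}"
        using sum_card_bound[OF _ inj_sum_image(2)[OF inj]] inj_sum_image(1)[OF inj] sf by simp
      define g where "g i = (if i < ?r then (if f i < m then f i else m) else i)" for i
      have gF: "g \<in> FS ?r ?r" unfolding FS_def g_def by auto
      have "comp g = f"
      proof
        fix i show "comp g i = f i"
        proof (cases "i < ?r")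
          case True
          then have "f i \<in> insert ?r {..<m}" using im by auto
          then show ?thesis using True unfolding comp_def g_def \<kappa>_def by auto
        next
          case False
          then show ?thesis using f unfolding comp_def FS_def by auto
        qed
      qed
      then show False using f gF by auto
    qed
  qed
  have "(\<Sum>g\<in>FS ?r ?r. h (comp g)) = (\<Sum>f\<in>comp ` FS ?r ?r. h f)"
    using injc by (simp add: sum.reindex)
  also have "\<dots> = (\<Sum>f\<in>FS ?r ?s. h f)"
    by (rule sum.mono_neutral_left[OF finite_FS sub zero])
  finally show ?thesis using step1 unfolding h_def \<kappa>_def by simp
qed


lemma VK_nonzero:
  assumes m1: "1 \<le> m"
  shows "det (mat (Suc m) (Suc m) (\<lambda>(i,l). real i ^ (if l < m then l else Suc m) / fact (if l < m then l else Suc m))) \<noteq> 0"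
proof -
  define \<kappa> where "\<kappa> l = (if l < m then l else Suc m)" for l
  define \<phi> :: "nat \<Rightarrow> real poly" where "\<phi> l = monom (1 / fact (\<kappa> l)) (\<kappa> l)" for l
  have M: "mat (Suc m) (Suc m) (\<lambda>(i,l). real i ^ (if l < m then l else Suc m) / fact (if l < m then l else Suc m))
         = mat (Suc m) (Suc m) (\<lambda>(j,l). poly (\<phi> l) (real j))"
  proof (rule eq_matI)
    fix i j assume "i < dim_row (mat (Suc m) (Suc m) (\<lambda>(j,l). poly (\<phi> l) (real j)))"
      "j < dim_col (mat (Suc m) (Suc m) (\<lambda>(j,l). poly (\<phi> l) (real j)))"
    then have i: "i < Suc m" and j: "j < Suc m" by auto
    have "poly (\<phi> j) (real i) = real i ^ \<kappa> j / fact (\<kappa> j)" unfolding \<phi>_def poly_monom by simp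
    then show "mat (Suc m) (Suc m) (\<lambda>(i,l). real i ^ (if l < m then l else Suc m) / fact (if l < m then l else Suc m)) $$ (i, j) =
          mat (Suc m) (Suc m) (\<lambda>(j,l). poly (\<phi> l) (real j)) $$ (i, j)"
      using i j unfolding \<kappa>_def by simp
  qed auto
  have "det (mat (Suc m) (Suc m) (\<lambda>(j,l). poly (\<phi> l) (real j))) \<noteq> 0"
  proof (rule det_K_nonzero[OF m1])
    show "inj_on real {..m}" by (simp add: inj_on_def)
    have d: "degree (\<phi> l) = \<kappa> l" for l unfolding \<phi>_def by (rule degree_monom_eq) simp
    have nz: "\<phi> l \<noteq> 0" for l unfolding \<phi>_def by simp
    show "\<forall>l<m. \<phi> l \<noteq> 0 \<and> degree (\<phi> l) = l" using d nz unfolding \<kappa>_def by simp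
    show dm: "degree (\<phi> m) = Suc m" using d unfolding \<kappa>_def by simp
    have "real 1 \<le> (\<Sum>j\<le>m. real j)" using m1 by (intro member_le_sum) auto
    then have pos: "0 < (\<Sum>j\<le>m. real j)" by simp
    have lc: "lead_coeff (\<phi> m) = 1 / fact (Suc m)" unfolding dm unfolding \<phi>_def \<kappa>_def by simp
    have c0: "coeff (\<phi> m) m = 0" unfolding \<phi>_def \<kappa>_def by simp
    have "0 < 1 / (fact (Suc m) :: real) * (\<Sum>j\<le>m. real j)" using pos by simp
    then show "coeff (\<phi> m) m \<noteq> - lead_coeff (\<phi> m) * (\<Sum>j\<le>m. real j)" unfolding lc c0 by linarith
  qed
  then show ?thesis using M by simp
qed


lemma B0_nonzero:
  assumes m1: "1 \<le> m" and inj: "inj_on d {..m}" and ne: "(\<Sum>j\<le>m. d j) \<noteq> Tri (Suc m)"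
  shows "det (mat (Suc m) (Suc m) (\<lambda>(j,l). poly (ff (if l < m then l else Suc m)) (real (d j)))) \<noteq> 0"
proof (rule det_K_nonzero[OF m1])
  show "inj_on (\<lambda>j. real (d j)) {..m}" using inj unfolding inj_on_def by auto
  show "\<forall>l<m. ff (if l < m then l else Suc m) \<noteq> 0 \<and> degree (ff (if l < m then l else Suc m)) = l"
    by (auto simp: ff_props)
  show "degree (ff (if m < m then m else Suc m)) = Suc m" by (simp add: ff_props)
  have "(\<Sum>j\<le>m. real (d j)) \<noteq> (\<Sum>l\<le>m. real l)"
  proof
    assume "(\<Sum>j\<le>m. real (d j)) = (\<Sum>l\<le>m. real l)"
    then have "real (\<Sum>j\<le>m. d j) = real (\<Sum>l\<le>m. l)" by (simp only: of_nat_sum)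
    then have "(\<Sum>j\<le>m. d j) = (\<Sum>l\<le>m. l)" by (simp only: of_nat_eq_iff)
    then show False using ne unfolding Tri_def by (simp add: lessThan_Suc_atMost)
  qed
  moreover have "coeff (ff (Suc m)) m = - (\<Sum>l\<le>m. real l)" by (rule ff_props)
  moreover have "lead_coeff (ff (Suc m)) = 1" by (rule ff_props)
  ultimately show "coeff (ff (if m < m then m else Suc m)) m \<noteq>
      - lead_coeff (ff (if m < m then m else Suc m)) * (\<Sum>j\<le>m. real (d j))" by simp
qed


lemma part3_core:
  fixes q :: "nat \<Rightarrow> real poly"
  assumes m1: "1 \<le> m" and mn: "m < n"
    and nz: "\<forall>j\<le>m. q j \<noteq> 0" and inj: "inj_on (\<lambda>j. degree (q j)) {..m}"
    and dle: "\<forall>j\<le>m. degree (q j) \<le> n" and big: "\<exists>j\<le>m. n \<le> degree (q j)"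
  shows "\<exists>x. wronskian q m x \<noteq> casoratian q m x"
proof (rule ccontr)
  assume "\<not> (\<exists>x. wronskian q m x \<noteq> casoratian q m x)"
  then have eq: "\<forall>x. wronskian q m x = casoratian q m x" by simp
  let ?r = "Suc m"
  let ?s = "Suc n"
  define d where "d j = degree (q j)" for j
  define S where "S = (\<Sum>j\<in>{0..<?r}. d j)"
  have rng: "{0..<?r} = {..m}" by auto
  have inj0: "inj_on d {0..<?r}" using inj unfolding d_def rng .
  have SgT: "Tri ?r + 1 \<le> S"
  proof -
    note bnd = sum_card_bound[OF _ inj_sum_image(2)[OF inj0]]
    have "Tri ?r \<le> S" using bnd inj_sum_image(1)[OF inj0] unfolding S_def by simp
    moreover have "S \<noteq> Tri ?r"
    proof
      assume "S = Tri ?r"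
      then have im: "d ` {0..<?r} = {..<?r}" using bnd inj_sum_image(1)[OF inj0] unfolding S_def by simp
      obtain j where j: "j \<le> m" "n \<le> d j" using big unfolding d_def by auto
      then have "d j \<in> d ` {0..<?r}" by auto
      then show False using im j mn by auto
    qed
    ultimately show ?thesis by linarith
  qed
  define Pf where "Pf f = (\<Prod>j\<in>{0..<?r}. (pderiv ^^ f j) (q j))" for f
  define T where "T = (\<Sum>f\<in>FS ?r ?s. smult (cV ?r f - cI ?r f) (Pf f))"
  have degs: "\<forall>j<Suc m. degree (q j) < ?s" using dle by (simp add: less_Suc_eq_le)
  have Fc: "Fm q ?r ?s x \<in> carrier_mat ?s ?r" for x by (simp add: Fm_def)
  have polyT: "poly T x = casoratian q m x - wronskian q m x" for x
  proof -
    have C: "casoratian q m x = (\<Sum>f\<in>FS ?r ?s. (\<Prod>j\<in>{0..<?r}. poly ((pderiv ^^ f j) (q j)) x) * cV ?r f)"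
    proof -
      have "casoratian q m x = det (Vm ?r ?s * Fm q ?r ?s x)"
        unfolding casoratian_def using Cm_factor[OF degs] by simp
      also have "\<dots> = (\<Sum>f\<in>FS ?r ?s. (\<Prod>j\<in>{0..<?r}. Fm q ?r ?s x $$ (f j, j)) *
                         det (mat ?r ?r (\<lambda>(i,j). Vm ?r ?s $$ (i, f j))))"
        by (rule det_mult_expand[OF _ Fc]) (simp add: Vm_def)
      also have "\<dots> = (\<Sum>f\<in>FS ?r ?s. (\<Prod>j\<in>{0..<?r}. poly ((pderiv ^^ f j) (q j)) x) * cV ?r f)"
      proof (rule sum.cong[OF refl])
        fix f assume f: "f \<in> FS ?r ?s"
        have fs: "\<And>j. j < ?r \<Longrightarrow> f j < ?s" using f unfolding FS_def by auto
        have "(\<Prod>j\<in>{0..<?r}. Fm q ?r ?s x $$ (f j, j)) = (\<Prod>j\<in>{0..<?r}. poly ((pderiv ^^ f j) (q j)) x)"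
          using fs by (intro prod.cong) (auto simp: Fm_def)
        moreover have "mat ?r ?r (\<lambda>(i,j). Vm ?r ?s $$ (i, f j)) = mat ?r ?r (\<lambda>(i,j). real i ^ f j / fact (f j))"
          using fs by (intro eq_matI) (auto simp: Vm_def)
        ultimately show "(\<Prod>j\<in>{0..<?r}. Fm q ?r ?s x $$ (f j, j)) * det (mat ?r ?r (\<lambda>(i,j). Vm ?r ?s $$ (i, f j))) =
              (\<Prod>j\<in>{0..<?r}. poly ((pderiv ^^ f j) (q j)) x) * cV ?r f"
          unfolding cV_def by simp
      qed
      finally show ?thesis .
    qed
    have W: "wronskian q m x = (\<Sum>f\<in>FS ?r ?s. (\<Prod>j\<in>{0..<?r}. poly ((pderiv ^^ f j) (q j)) x) * cI ?r f)"
    proof -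
      have "wronskian q m x = det (Im ?r ?s * Fm q ?r ?s x)"
        unfolding wronskian_def using Wm_factor[of m ?s q x] mn by simp
      also have "\<dots> = (\<Sum>f\<in>FS ?r ?s. (\<Prod>j\<in>{0..<?r}. Fm q ?r ?s x $$ (f j, j)) *
                         det (mat ?r ?r (\<lambda>(i,j). Im ?r ?s $$ (i, f j))))"
        by (rule det_mult_expand[OF _ Fc]) (simp add: Im_def)
      also have "\<dots> = (\<Sum>f\<in>FS ?r ?s. (\<Prod>j\<in>{0..<?r}. poly ((pderiv ^^ f j) (q j)) x) * cI ?r f)"
      proof (rule sum.cong[OF refl])
        fix f assume f: "f \<in> FS ?r ?s"
        have fs: "\<And>j. j < ?r \<Longrightarrow> f j < ?s" using f unfolding FS_def by auto
        have "(\<Prod>j\<in>{0..<?r}. Fm q ?r ?s x $$ (f j, j)) = (\<Prod>j\<in>{0..<?r}. poly ((pderiv ^^ f j) (q j)) x)"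
          using fs by (intro prod.cong) (auto simp: Fm_def)
        moreover have "mat ?r ?r (\<lambda>(i,j). Im ?r ?s $$ (i, f j)) = mat ?r ?r (\<lambda>(i,j). if i = f j then 1 else 0)"
          using fs by (intro eq_matI) (auto simp: Im_def)
        ultimately show "(\<Prod>j\<in>{0..<?r}. Fm q ?r ?s x $$ (f j, j)) * det (mat ?r ?r (\<lambda>(i,j). Im ?r ?s $$ (i, f j))) =
              (\<Prod>j\<in>{0..<?r}. poly ((pderiv ^^ f j) (q j)) x) * cI ?r f"
          unfolding cI_def by simp
      qed
      finally show ?thesis .
    qed
    have "poly T x = (\<Sum>f\<in>FS ?r ?s. (cV ?r f - cI ?r f) * (\<Prod>j\<in>{0..<?r}. poly ((pderiv ^^ f j) (q j)) x))"
      unfolding T_def Pf_def by (simp add: poly_sum poly_prod)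
    also have "\<dots> = casoratian q m x - wronskian q m x"
      unfolding C W by (simp add: sum_subtractf algebra_simps)
    finally show ?thesis .
  qed
  have T0: "T = 0"
    using polyT eq poly_all_0_iff_0[of T] by simp
  define b where "b k j = poly (ff k) (real (d j)) * lead_coeff (q j)" for k j
  define \<kappa> where "\<kappa> l = (if l < m then l else Suc m)" for l
  have "coeff T (S - (Tri ?r + 1)) = (\<Sum>f\<in>FS ?r ?s. if (\<Sum>j\<in>{0..<?r}. f j) = Tri ?r + 1
            then cV ?r f * (\<Prod>j\<in>{0..<?r}. b (f j) j) else 0)"
    unfolding T_def coeff_sum
  proof (rule sum.cong[OF refl])
    fix f assume f: "f \<in> FS ?r ?s"
    show "coeff (smult (cV ?r f - cI ?r f) (Pf f)) (S - (Tri ?r + 1)) =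
          (if (\<Sum>j\<in>{0..<?r}. f j) = Tri ?r + 1 then cV ?r f * (\<Prod>j\<in>{0..<?r}. b (f j) j) else 0)"
      using per_f[OF f, of q] SgT unfolding S_def d_def Pf_def b_def by simp
  qed
  also have "\<dots> = det (mat ?r ?r (\<lambda>(i,l). real i ^ \<kappa> l / fact (\<kappa> l)) * mat ?r ?r (\<lambda>(l,j). b (\<kappa> l) j))"
    unfolding \<kappa>_def by (rule reindex_K[OF mn])
  also have "\<dots> = det (mat ?r ?r (\<lambda>(i,l). real i ^ \<kappa> l / fact (\<kappa> l))) * det (mat ?r ?r (\<lambda>(l,j). b (\<kappa> l) j))"
    by (rule det_mult) auto
  finally have coeffT: "coeff T (S - (Tri ?r + 1)) =
      det (mat ?r ?r (\<lambda>(i,l). real i ^ \<kappa> l / fact (\<kappa> l))) * det (mat ?r ?r (\<lambda>(l,j). b (\<kappa> l) j))" .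
  have VK: "det (mat ?r ?r (\<lambda>(i,l). real i ^ \<kappa> l / fact (\<kappa> l))) \<noteq> 0"
    using VK_nonzero[OF m1] unfolding \<kappa>_def .
  have BK: "det (mat ?r ?r (\<lambda>(l,j). b (\<kappa> l) j)) \<noteq> 0"
  proof -
    let ?B0 = "mat ?r ?r (\<lambda>(l,j). poly (ff (\<kappa> l)) (real (d j)))"
    let ?Dg = "mat ?r ?r (\<lambda>(i,j). if i = j then lead_coeff (q j) else 0)"
    have fac: "mat ?r ?r (\<lambda>(l,j). b (\<kappa> l) j) = ?B0 * ?Dg"
    proof (rule eq_matI)
      fix i j assume "i < dim_row (?B0 * ?Dg)" "j < dim_col (?B0 * ?Dg)"
      then have i: "i < ?r" and j: "j < ?r" by auto
      have "(?B0 * ?Dg) $$ (i,j) = (\<Sum>k\<in>{0..<?r}. poly (ff (\<kappa> i)) (real (d k)) * (if k = j then lead_coeff (q j) else 0))"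
        using i j by (simp add: scalar_prod_def)
      also have "\<dots> = (\<Sum>k\<in>{0..<?r}. if k = j then poly (ff (\<kappa> i)) (real (d j)) * lead_coeff (q j) else 0)"
        by (rule sum.cong) auto
      also have "\<dots> = b (\<kappa> i) j" using j unfolding b_def by simp
      finally show "mat ?r ?r (\<lambda>(l,j). b (\<kappa> l) j) $$ (i,j) = (?B0 * ?Dg) $$ (i,j)" using i j by simp
    qed auto
    have dD: "det ?Dg \<noteq> 0"
    proof -
      have "det ?Dg = prod_list (diag_mat ?Dg)"
        by (rule det_upper_triangular) (auto simp: upper_triangular_def)
      moreover have "0 \<notin> set (diag_mat ?Dg)" using nz by (auto simp: diag_mat_def)
      ultimately show ?thesis by (simp add: prod_list_zero_iff)
    qed
    have dB: "det ?B0 \<noteq> 0"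
    proof -
      have tr: "transpose_mat ?B0 = mat ?r ?r (\<lambda>(j,l). poly (ff (\<kappa> l)) (real (d j)))"
        by (intro eq_matI) auto
      have injd: "inj_on d {..m}" using inj unfolding d_def .
      have ne: "(\<Sum>j\<le>m. d j) \<noteq> Tri (Suc m)"
      proof -
        have "(\<Sum>j\<le>m. d j) = S" unfolding S_def rng ..
        then show ?thesis using SgT by simp
      qed
      have "det (mat ?r ?r (\<lambda>(j,l). poly (ff (\<kappa> l)) (real (d j)))) \<noteq> 0"
        using B0_nonzero[OF m1 injd ne] unfolding \<kappa>_def .
      then show ?thesis using tr det_transpose[of ?B0 ?r] by simp
    qed
    show ?thesis unfolding fac using dB dD by (simp add: det_mult[of ?B0 ?r ?Dg])
  qed
  have "coeff T (S - (Tri ?r + 1)) \<noteq> 0" unfolding coeffT using VK BK by simp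
  then show False using T0 by simp
qed




lemma n_char:
  fixes p :: "nat \<Rightarrow> real poly"
  assumes n_def: "n = (LEAST k. \<forall>i\<le>m. p i \<in> polys_upto k)"
  shows "\<forall>i\<le>m. degree (p i) \<le> n" "\<exists>i\<le>m. degree (p i) = n"
proof -
  define M where "M = Max ((\<lambda>i. degree (p i)) ` {..m})"
  have fin: "finite ((\<lambda>i. degree (p i)) ` {..m})" "(\<lambda>i. degree (p i)) ` {..m} \<noteq> {}" by auto
  have "n = M" unfolding n_def
  proof (rule Least_equality)
    show "\<forall>i\<le>m. p i \<in> polys_upto M" unfolding polys_upto_def M_def using fin by auto
    show "\<And>y. \<forall>i\<le>m. p i \<in> polys_upto y \<Longrightarrow> M \<le> y"
      unfolding polys_upto_def M_def using fin by (auto simp: Max_le_iff)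
  qed
  show "\<forall>i\<le>m. degree (p i) \<le> n" unfolding \<open>n = M\<close> M_def using fin by auto
  have "M \<in> (\<lambda>i. degree (p i)) ` {..m}" unfolding M_def using Max_in[OF fin] .
  then show "\<exists>i\<le>m. degree (p i) = n" unfolding \<open>n = M\<close> by auto
qed

lemma indep_iff: "indep p {..m} \<longleftrightarrow> \<not> poly_lin_dep p m"
  unfolding indep_def poly_lin_dep_def by auto

theorem mainTheorem4:
  fixes p :: "nat \<Rightarrow> real poly" and m n :: nat
  assumes distinct: "inj_on p {..m}"
    and n_def: "n = (LEAST k. \<forall>i\<le>m. p i \<in> polys_upto k)"
  shows
    "(m \<le> n \<and> poly_span p m = polys_upto m \<longrightarrow>
        (\<forall>x. wronskian p m x = casoratian p m x))
   \<and> (m \<le> n \<and> poly_lin_dep p m \<longrightarrow>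
        (\<forall>x. wronskian p m x = 0 \<and> casoratian p m x = 0))
   \<and> (m < n \<and> 1 \<le> m \<and> \<not> poly_lin_dep p m \<and>
        (\<forall>k\<in>{1..m}. poly_span p m \<noteq> polys_upto k) \<longrightarrow>
        (\<exists>x. wronskian p m x \<noteq> casoratian p m x))
   \<and> (n < m \<longrightarrow>
        poly_lin_dep p m \<and> (\<forall>x. wronskian p m x = 0 \<and> casoratian p m x = 0))"
proof (intro conjI impI)
  note nc = n_char[OF n_def]
  show "\<forall>x. wronskian p m x = casoratian p m x" if h: "m \<le> n \<and> poly_span p m = polys_upto m"
  proof
    fix x
    have "\<forall>j\<le>m. degree (p j) \<le> m"
    proof (intro allI impI)
      fix j assume j: "j \<le> m"
      have "p j = (\<Sum>i\<le>m. smult (if i = j then 1 else 0) (p i))"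
        using sum_delta_smult[of "{..m}" j 1 p] j by simp
      then have "p j \<in> poly_span p m" unfolding poly_span_def
        by (intro CollectI exI[of _ "\<lambda>i. if i = j then 1 else 0"]) simp
      then show "degree (p j) \<le> m" using h unfolding polys_upto_def by auto
    qed
    then show "wronskian p m x = casoratian p m x" using cas_eq_wron_low by simp
  qed
  show "\<forall>x. wronskian p m x = 0 \<and> casoratian p m x = 0" if "m \<le> n \<and> poly_lin_dep p m"
    using dep_zero that by blast
  show "\<exists>x. wronskian p m x \<noteq> casoratian p m x"
    if h: "m < n \<and> 1 \<le> m \<and> \<not> poly_lin_dep p m \<and> (\<forall>k\<in>{1..m}. poly_span p m \<noteq> polys_upto k)"
  proof -
    have ind: "indep p {..m}" using h indep_iff by blast
    obtain q where q: "\<forall>j\<in>{..m}. inspan p {..m} (q j)" "inj_on (\<lambda>j. degree (q j)) {..m}"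
      "\<forall>j\<in>{..m}. q j \<noteq> 0" "\<forall>i\<in>{..m}. \<exists>j\<in>{..m}. degree (p i) \<le> degree (q j)"
      using reduce[OF _ ind] by blast
    obtain C where C: "\<forall>j\<le>m. q j = (\<Sum>k\<le>m. smult (C j k) (p k))"
    proof -
      have "\<forall>j\<in>{..m}. \<exists>c. q j = (\<Sum>k\<le>m. smult (c k) (p k))" using q(1) unfolding inspan_def by blast
      then obtain C where "\<forall>j\<in>{..m}. q j = (\<Sum>k\<le>m. smult (C j k) (p k))" by metis
      then show ?thesis using that by auto
    qed
    have dle: "\<forall>j\<le>m. degree (q j) \<le> n"
      using q(1) nc(1) degree_inspan[of "{..m}" p n] by auto
    have big: "\<exists>j\<le>m. n \<le> degree (q j)"
    proof -
      obtain i where "i \<le> m" "degree (p i) = n" using nc(2) by blast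
      then show ?thesis using q(4) by fastforce
    qed
    obtain x where x: "wronskian q m x \<noteq> casoratian q m x"
      using part3_core[of m n q] h q(2,3) dle big by auto
    have "wronskian p m x \<noteq> casoratian p m x"
    proof
      assume "wronskian p m x = casoratian p m x"
      then show False using x transform_eq[OF C, of x] by simp
    qed
    then show ?thesis by blast
  qed
  show dep: "poly_lin_dep p m" if h: "n < m"
  proof (rule ccontr)
    assume "\<not> poly_lin_dep p m"
    then have ind: "indep p {..m}" using indep_iff by blast
    obtain q where q: "\<forall>j\<in>{..m}. inspan p {..m} (q j)" "inj_on (\<lambda>j. degree (q j)) {..m}"
      using reduce[OF _ ind] by blast
    have dle: "\<forall>j\<le>m. degree (q j) \<le> n"
      using q(1) nc(1) degree_inspan[of "{..m}" p n] by auto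
    have "(\<lambda>j. degree (q j)) ` {..m} \<subseteq> {..n}" using dle by auto
    then have "card {..m} \<le> card {..n}" using card_inj_on_le[OF q(2) _ finite_atMost] by blast
    then show False using h by simp
  qed
  show "\<forall>x. wronskian p m x = 0 \<and> casoratian p m x = 0" if "n < m"
    using dep_zero dep[OF that] by blast
qed


end
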